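(* In the standing setup below, every $\phi\in\mathrm{Dr}_1(\mathbf{A}_{\mathcal H},L)$ has the form $\phi_{\overline X}=\Delta\tau^2+g\tau+\gamma(\overline X)$ and $\phi_{\overline Y}=\beta\tau_L$, where $\Delta\in L^\times$, $g\in L$, $\beta\in\mathbb{F}_q^\times$. Moreover $\beta$ is a square root of $\alpha\,\mathrm{N}_{L/\mathbb{F}_q}(\Delta)\in\mathbb{F}_q^\times$, and $\beta$ is uniquely determined by $\Delta$ and $g$ (i.e. two modules in $\mathrm{Dr}_1(\mathbf{A}_{\mathcal H},L)$ with the same $\phi_{\overline X}$ coincide).
   Context: Standing setup: $\mathbb{F}_q$ is the finite field with $q$ elements. Let $d\ge5$ be odd, $m$ a positive divisor of $d$, $p\in\mathbb{F}_q[X]$ monic irreducible of degree $d/m$, $f=\alpha p^m$ with $\alpha\in\mathbb{F}_q^\times$, and $h\in\mathbb{F}_q[X]$ nonzero of degree $\le(d-1)/2$ and not divisible by $p$. Let $\xi=Y^2+h(X)Y-f(X)$ and assume the affine plane curve $\mathcal H:\xi=0$ is nonsingular. Let $\mathbf{A}_{\mathcal H}=\mathbb{F}_q[X][Y]/(\xi)$, $\mathfrak{p}=\langle p(\overline X),\overline Y\rangle$, $L$ a degree-$m$ extension of $\mathbf{A}_{\mathcal H}/\mathfrak{p}\simeq\mathbb{F}_q[X]/(p)$ (so $[L:\mathbb{F}_q]=d$), $\gamma:\mathbf{A}_{\mathcal H}\to\mathbf{A}_{\mathcal H}/\mathfrak{p}\hookrightarrow L$. $L\{\tau\}$ is the Ore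 polynomial ring with $\tau a=a^q\tau$; $\tau_L=\tau^d$. A Drinfeld $\mathbf{A}_{\mathcal H}$-module over $L$ is an $\mathbb{F}_q$-algebra morphism $\phi:\mathbf{A}_{\mathcal H}\to L\{\tau\}$ with constant coefficient of $\phi_a$ equal to $\gamma(a)$ and some $\phi_a$ nonconstant; it has rank $1$ if $\deg_\tau\phi_a=\deg(a)=\log_q\#(\mathbf{A}_{\mathcal H}/a\mathbf{A}_{\mathcal H})$ for all $a\neq0$; $\mathrm{Dr}_1(\mathbf{A}_{\mathcal H},L)$ is the set of these. $\mathrm{N}_{L/\mathbb{F}_q}$ is the field norm. *)

theory Defs
  imports "HOL-Library.Cardinality" "HOL-Computational_Algebra.Polynomial" "HOL-Algebra.Algebraic_Closure_Type"
begin

text \<open>Ore polynomials L{tau}, with tau a = a^q tau, are represented by ordinary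
  polynomials (coefficient i = coefficient of tau^i); addition is polynomial addition,
  multiplication is the twisted product below.\<close>

definition ore_mult :: "nat \<Rightarrow> 'l::field poly \<Rightarrow> 'l poly \<Rightarrow> 'l poly" where
  "ore_mult q A B = (\<Sum>i\<le>Polynomial.degree A. \<Sum>j\<le>Polynomial.degree B.
       Polynomial.monom (Polynomial.coeff A i * Polynomial.coeff B j ^ (q ^ i)) (i + j))"

definition fnorm :: "nat \<Rightarrow> nat \<Rightarrow> 'l::field \<Rightarrow> 'l" where
  "fnorm q d x = (\<Prod>i<d. x ^ (q ^ i))"

text \<open>Elements of F_q[X][Y] are 'k poly poly (outer variable Y, inner variable X).
  The variables X and Y:\<close>
definition varX :: "'k::comm_ring_1 poly poly" where "varX = [:[:0, 1:]:]"
definition varY :: "'k::comm_ring_1 poly poly" where "varY = [:0, 1:]"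

text \<open>gamma : A_H -> A_H/p -> L, induced by X |-> theta (a root of p in L), Y |-> 0.\<close>
definition gam :: "('k \<Rightarrow> 'l::field) \<Rightarrow> 'l \<Rightarrow> 'k::comm_ring_1 poly poly \<Rightarrow> 'l" where
  "gam \<iota> \<theta> P = poly (map_poly \<iota> (Polynomial.coeff P 0)) \<theta>"

text \<open>#(A_H / a A_H) for a represented by P: cardinality of F_q[X,Y]/(xi, P).\<close>
definition quot_card :: "'k::comm_ring_1 poly poly \<Rightarrow> 'k poly poly \<Rightarrow> nat" where
  "quot_card \<xi> P = card (UNIV // {(u, v). \<exists>r s. u - v = r * \<xi> + s * P})"

text \<open>Drinfeld A_H-modules over L of rank 1: F_q-algebra morphisms
  F_q[X][Y] -> L{tau} killing xi (= morphisms A_H -> L{tau}).\<close>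
definition Dr1 :: "nat \<Rightarrow> ('k::field \<Rightarrow> 'l::field) \<Rightarrow> 'l \<Rightarrow> 'k poly poly
                   \<Rightarrow> ('k poly poly \<Rightarrow> 'l poly) set" where
  "Dr1 q \<iota> \<theta> \<xi> = {\<phi>.
      (\<forall>P Q. \<phi> (P + Q) = \<phi> P + \<phi> Q) \<and>
      (\<forall>P Q. \<phi> (P * Q) = ore_mult q (\<phi> P) (\<phi> Q)) \<and>
      (\<forall>c. \<phi> [:[:c:]:] = [:\<iota> c:]) \<and>
      \<phi> \<xi> = 0 \<and>
      (\<forall>P. Polynomial.coeff (\<phi> P) 0 = gam \<iota> \<theta> P) \<and>
      (\<exists>P. Polynomial.degree (\<phi> P) > 0) \<and>
      (\<forall>P. \<not> \<xi> dvd P \<longrightarrow>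
           real (Polynomial.degree (\<phi> P)) = log (real q) (real (quot_card \<xi> P)))}"

end

theory Submission
  imports Defs
begin

lemma fin_field_pow_card:
  fixes x :: "'a::{finite,field}"
  shows "x ^ CARD('a) = x"
proof (cases "x = 0")
  case False
  have "x * (\<Prod>y\<in>UNIV-{0}. x * y) = x * x ^ (card (UNIV :: 'a set) - 1) * \<Prod>(UNIV-{0})"
    by (simp add: prod.distrib mult_ac)
  also have "x * x ^ (card (UNIV :: 'a set) - 1) = x ^ Suc (card (UNIV :: 'a set) - 1)"
    by (subst power_Suc) auto
  also have "Suc (card (UNIV :: 'a set) - 1) = card (UNIV :: 'a set)"
    using finite_UNIV_card_ge_0[where ?'a = 'a] by simp
  also have "(\<Prod>y\<in>UNIV-{0}. x * y) = (\<Prod>y\<in>UNIV-{0}. y)"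
    by (rule prod.reindex_bij_witness[of _ "\<lambda>y. y / x" "\<lambda>y. x * y"]) (use False in auto)
  finally show ?thesis
    by simp
qed (use finite_UNIV_card_ge_0[where ?'a = 'a] in auto)

lemma fin_field_pow_card_pow:
  fixes x :: "'a::{finite,field}"
  shows "x ^ (CARD('a) ^ n) = x"
  by (induction n) (simp_all add: fin_field_pow_card power_mult mult.commute[of "CARD('a)"])

lemma card_ge2: "CARD('a::{finite,field}) \<ge> 2"
proof -
  have "{0::'a, 1} \<subseteq> UNIV" by simp
  hence "card {0::'a,1} \<le> CARD('a)" by (intro card_mono) auto
  thus ?thesis by simp
qed

definition rhom :: "('a::comm_ring_1 \<Rightarrow> 'b::comm_ring_1) \<Rightarrow> bool" where
  "rhom f \<longleftrightarrow> (\<forall>a b. f (a+b) = f a + f b) \<and> (\<forall>a b. f (a*b) = f a * f b) \<and> f 1 = 1"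

lemma rhom_add: "rhom f \<Longrightarrow> f (a+b) = f a + f b" by (simp add: rhom_def)
lemma rhom_mult: "rhom f \<Longrightarrow> f (a*b) = f a * f b" by (simp add: rhom_def)
lemma rhom_1: "rhom f \<Longrightarrow> f 1 = 1" by (simp add: rhom_def)
lemma rhom_0: "rhom f \<Longrightarrow> f 0 = 0"
proof -
  assume "rhom f"
  hence "f (0+0) = f 0 + f 0" by (rule rhom_add)
  thus ?thesis by simp
qed
lemma rhom_uminus: "rhom f \<Longrightarrow> f (-a) = - f a"
proof -
  assume h: "rhom f"
  hence "f (a + -a) = f a + f (-a)" by (rule rhom_add)
  hence "f a + f (-a) = 0" using rhom_0[OF h] by simp
  thus ?thesis by (simp add: eq_neg_iff_add_eq_0 add.commute)
qed
lemma rhom_diff: "rhom f \<Longrightarrow> f (a-b) = f a - f b"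
  using rhom_add[of f a "-b"] rhom_uminus[of f b] by simp
lemma rhom_sum: "rhom f \<Longrightarrow> f (sum g A) = (\<Sum>x\<in>A. f (g x))"
  by (induction A rule: infinite_finite_induct) (simp_all add: rhom_0 rhom_add)
lemma rhom_power: "rhom f \<Longrightarrow> f (a ^ n) = f a ^ n"
  by (induction n) (simp_all add: rhom_1 rhom_mult)
lemma rhom_of_nat: "rhom f \<Longrightarrow> f (of_nat n) = of_nat n"
  by (induction n) (simp_all add: rhom_0 rhom_1 rhom_add)

lemma rhom_map_poly_add: "rhom f \<Longrightarrow> map_poly f (p + q) = map_poly f p + map_poly f q"
  by (rule poly_eqI) (simp add: coeff_map_poly rhom_0 rhom_add)
lemma rhom_map_poly_mult: "rhom f \<Longrightarrow> map_poly f (p * q) = map_poly f p * map_poly f q"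
  by (rule poly_eqI) (simp add: coeff_map_poly rhom_0 rhom_mult rhom_sum coeff_mult)
lemma rhom_map_poly_uminus: "rhom f \<Longrightarrow> map_poly f (- p) = - map_poly f p"
  by (rule poly_eqI) (simp add: coeff_map_poly rhom_0 rhom_uminus)
lemma rhom_map_poly_diff: "rhom f \<Longrightarrow> map_poly f (p - q) = map_poly f p - map_poly f q"
  by (rule poly_eqI) (simp add: coeff_map_poly rhom_0 rhom_diff)
lemma rhom_map_poly: "rhom f \<Longrightarrow> rhom (map_poly f)"
  unfolding rhom_def[of "map_poly f"]
  by (auto simp: rhom_map_poly_add rhom_map_poly_mult rhom_1)
lemma rhom_poly: "rhom (\<lambda>p. poly p x)"
  by (simp add: rhom_def)
lemma rhom_comp: "rhom f \<Longrightarrow> rhom g \<Longrightarrow> rhom (\<lambda>x. g (f x))"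
  by (simp add: rhom_def)
lemma rhom_coeff0: "rhom (\<lambda>p. coeff p 0)"
  by (simp add: rhom_def coeff_mult_0)

lemma coeff_ore:
  assumes q: "q > 0"
  shows "coeff (ore_mult q A B) n = (\<Sum>i\<le>n. coeff A i * coeff B (n - i) ^ (q ^ i))"
proof -
  define T where "T i = coeff A i * coeff B (n - i) ^ (q ^ i)" for i
  have inner: "(\<Sum>j\<le>degree B. coeff (monom (coeff A i * coeff B j ^ (q ^ i)) (i + j)) n)
      = (if i \<le> n then T i else 0)" for i
  proof (cases "i \<le> n")
    case True
    have "(\<Sum>j\<le>degree B. coeff (monom (coeff A i * coeff B j ^ (q ^ i)) (i + j)) n)
        = (\<Sum>j\<le>degree B. if j = n - i then coeff A i * coeff B j ^ (q ^ i) else 0)"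
      using True by (intro sum.cong) auto
    also have "\<dots> = (if n - i \<in> {..degree B} then coeff A i * coeff B (n-i) ^ (q ^ i) else 0)"
      by simp
    also have "\<dots> = T i"
      using q by (auto simp: T_def coeff_eq_0)
    finally show ?thesis using True by simp
  next
    case False
    thus ?thesis by (auto intro!: sum.neutral)
  qed
  have "coeff (ore_mult q A B) n = (\<Sum>i\<le>degree A. if i \<le> n then T i else 0)"
    unfolding ore_mult_def by (simp only: coeff_sum inner)
  also have "\<dots> = (\<Sum>i\<in>{..degree A} \<inter> {..n}. T i)"
    by (subst sum.inter_restrict) (auto intro!: sum.cong)
  also have "\<dots> = (\<Sum>i\<le>n. T i)"
    by (rule sum.mono_neutral_left) (auto simp: T_def coeff_eq_0)
  finally show ?thesis by (simp add: T_def)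
qed

lemma ore_0_left: "ore_mult q 0 B = 0"
  by (simp add: ore_mult_def)

lemma ore_0_right: "q > 0 \<Longrightarrow> ore_mult q A 0 = 0"
  by (rule poly_eqI) (simp add: coeff_ore power_0_left)

lemma ore_const_left: "q > 0 \<Longrightarrow> ore_mult q [:c:] B = smult c B"
proof (rule poly_eqI)
  fix n assume q: "q > 0"
  have "coeff (ore_mult q [:c:] B) n = (\<Sum>i\<le>n. if i = 0 then c * coeff B n else 0)"
    unfolding coeff_ore[OF q] by (intro sum.cong) (auto simp: coeff_pCons split: nat.splits)
  also have "\<dots> = c * coeff B n" by simp
  finally show "coeff (ore_mult q [:c:] B) n = coeff (smult c B) n" by simp
qed

lemma coeff_ore_top:
  assumes q: "q > 0" and n: "n \<ge> degree A + degree B"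
  shows "coeff (ore_mult q A B) n =
    (if n = degree A + degree B then lead_coeff A * lead_coeff B ^ (q ^ degree A) else 0)"
proof -
  have "coeff (ore_mult q A B) n = (\<Sum>i\<le>n. if i = degree A then
      (if n = degree A + degree B then lead_coeff A * lead_coeff B ^ (q ^ degree A) else 0) else 0)"
    unfolding coeff_ore[OF q]
  proof (intro sum.cong refl)
    fix i assume i: "i \<in> {..n}"
    show "coeff A i * coeff B (n - i) ^ q ^ i = (if i = degree A then
      (if n = degree A + degree B then lead_coeff A * lead_coeff B ^ (q ^ degree A) else 0) else 0)"
    proof (cases "i > degree A")
      case True thus ?thesis by (simp add: coeff_eq_0)
    next
      case False
      show ?thesis
      proof (cases "n - i = degree B")
        case True
        hence "i = degree A" "n = degree A + degree B" using False n i by auto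
        thus ?thesis using True by simp
      next
        case F2: False
        hence "n - i > degree B" using False n by auto
        hence "coeff B (n - i) = 0" by (simp add: coeff_eq_0)
        moreover have "n \<noteq> degree A + degree B \<or> i \<noteq> degree A" using F2 by auto
        ultimately show ?thesis using q by auto
      qed
    qed
  qed
  also have "\<dots> = (if n = degree A + degree B then lead_coeff A * lead_coeff B ^ (q ^ degree A) else 0)"
    using n by (simp add: sum.delta)
  finally show ?thesis .
qed

lemma ore_degree:
  assumes q: "q > 0" and A: "A \<noteq> 0" and B: "B \<noteq> 0"
  shows "degree (ore_mult q A B) = degree A + degree B"
    and "lead_coeff (ore_mult q A B) = lead_coeff A * lead_coeff B ^ (q ^ degree A)"
    and "ore_mult q A B \<noteq> 0"
proof -
  have c: "coeff (ore_mult q A B) (degree A + degree B) = lead_coeff A * lead_coeff B ^ (q ^ degree A)"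
    using coeff_ore_top[OF q order.refl] by simp
  have nz: "lead_coeff A * lead_coeff B ^ (q ^ degree A) \<noteq> 0" using A B q by simp
  have le: "degree (ore_mult q A B) \<le> degree A + degree B"
    by (rule degree_le) (auto simp: coeff_ore_top[OF q])
  have ge: "degree A + degree B \<le> degree (ore_mult q A B)"
    by (rule le_degree) (metis c nz)
  show deg: "degree (ore_mult q A B) = degree A + degree B" using le ge by simp
  show "lead_coeff (ore_mult q A B) = lead_coeff A * lead_coeff B ^ (q ^ degree A)"
    using c deg by simp
  show "ore_mult q A B \<noteq> 0" using c nz by auto
qed

lemma coeff_ore_low:
  assumes q: "q > 0" and A: "\<forall>j<s. coeff A j = 0" and B: "\<forall>j<t. coeff B j = 0" and n: "n \<le> s + t"
  shows "coeff (ore_mult q A B) n = (if n = s + t then coeff A s * coeff B t ^ (q ^ s) else 0)"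
proof -
  have "coeff (ore_mult q A B) n = (\<Sum>i\<le>n. if i = s then
      (if n = s + t then coeff A s * coeff B t ^ (q ^ s) else 0) else 0)"
    unfolding coeff_ore[OF q]
  proof (intro sum.cong refl)
    fix i assume i: "i \<in> {..n}"
    show "coeff A i * coeff B (n - i) ^ q ^ i = (if i = s then
      (if n = s + t then coeff A s * coeff B t ^ (q ^ s) else 0) else 0)"
    proof (cases "i < s")
      case True thus ?thesis using A by auto
    next
      case False
      show ?thesis
      proof (cases "n - i = t")
        case True
        hence "i = s" "n = s + t" using False n i by auto
        thus ?thesis using True by simp
      next
        case F2: False
        hence "n - i < t" using False n by auto
        hence "coeff B (n - i) = 0" using B by simp
        moreover have "n \<noteq> s + t \<or> i \<noteq> s" using F2 by auto
        ultimately show ?thesis using q by auto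
      qed
    qed
  qed
  also have "\<dots> = (if n = s + t then coeff A s * coeff B t ^ (q ^ s) else 0)"
    using n by (simp add: sum.delta)
  finally show ?thesis .
qed

lemma comm_low:
  assumes q: "q > 0" and comm: "ore_mult q A Z = ore_mult q Z A"
    and A: "\<forall>j<w. coeff A j = 0" "coeff A w \<noteq> 0"
  shows "coeff Z 0 ^ (q ^ w) = coeff Z 0"
proof -
  have 1: "coeff (ore_mult q Z A) w = coeff Z 0 * coeff A w"
    using coeff_ore_low[OF q, of 0 Z w A w] A by simp
  have 2: "coeff (ore_mult q A Z) w = coeff A w * coeff Z 0 ^ (q ^ w)"
    using coeff_ore_low[OF q, of w A 0 Z w] A by simp
  from 1 2 comm A(2) show ?thesis by (simp add: mult.commute)
qed

lemma comm_top:
  assumes q: "q > 0" and comm: "ore_mult q A Z = ore_mult q Z A" and "A \<noteq> 0" "Z \<noteq> 0"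
  shows "lead_coeff Z * lead_coeff A ^ (q ^ degree Z) = lead_coeff A * lead_coeff Z ^ (q ^ degree A)"
  using ore_degree(2)[OF q, of Z A] ore_degree(2)[OF q, of A Z] comm assms by simp

lemma ore_add_left: "q > 0 \<Longrightarrow> ore_mult q (A + B) C = ore_mult q A C + ore_mult q B C"
  by (rule poly_eqI) (simp add: coeff_ore sum.distrib[symmetric] algebra_simps)

lemma choose_card_zero:
  assumes j: "0 < j" "j < CARD('k::{finite,field})"
  shows "of_nat (CARD('k) choose j) = (0::'k)"
proof -
  define q where "q = CARD('k)"
  have q2: "q \<ge> 2" unfolding q_def by (rule card_ge2)
  define D :: "'k poly" where "D = [:1,1:] ^ q - monom 1 q - 1"
  have roots: "poly D c = 0" for c
  proof -
    have "(1 + c) ^ q = 1 + c" "c ^ q = c" unfolding q_def by (rule fin_field_pow_card)+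
    thus ?thesis by (simp add: D_def poly_monom)
  qed
  have degp: "degree ([:1,1::'k:] ^ q) = q" by (simp add: degree_power_eq)
  have cq: "coeff D q = 0"
    using q2 by (simp add: D_def coeff_linear_power)
  have D0: "D = 0"
  proof (rule ccontr)
    assume nz: "D \<noteq> 0"
    have "degree D \<le> q"
      unfolding D_def by (intro degree_diff_le degree_diff_le) (auto simp: degp degree_monom_le)
    moreover have "degree D \<noteq> q" using cq nz by (metis leading_coeff_0_iff)
    ultimately have "degree D < q" by simp
    moreover have "card {x. poly D x = 0} \<le> degree D" by (rule card_poly_roots_bound[OF nz])
    moreover have "{x. poly D x = 0} = UNIV" using roots by auto
    ultimately show False by (simp add: q_def)
  qed
  have "coeff D j = of_nat (q choose j)"
    using j by (simp add: D_def coeff_linear_poly_power q_def)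
  thus ?thesis using D0 by (simp add: q_def)
qed

lemma frob_add:
  fixes \<iota> :: "'k::{finite,field} \<Rightarrow> 'l::field"
  assumes h: "rhom \<iota>"
  shows "(x + y) ^ CARD('k) = x ^ CARD('k) + (y::'l) ^ CARD('k)"
proof -
  define n where "n = CARD('k)"
  have n2: "n \<ge> 2" unfolding n_def by (rule card_ge2)
  have "(x + y) ^ n = (\<Sum>k\<le>n. of_nat (n choose k) * x ^ k * y ^ (n - k))"
    by (rule binomial_ring)
  also have "\<dots> = (\<Sum>k\<in>{0,n}. of_nat (n choose k) * x ^ k * y ^ (n - k))"
  proof (intro sum.mono_neutral_right ballI)
    fix k assume "k \<in> {..n} - {0, n}"
    hence k: "k > 0" "k < n" by auto
    have "of_nat (n choose k) = \<iota> (of_nat (n choose k))" using rhom_of_nat[OF h] by simp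
    also have "\<dots> = 0" using choose_card_zero[of k, where 'k='k] k rhom_0[OF h] by (simp add: n_def)
    finally show "of_nat (n choose k) * x ^ k * y ^ (n - k) = 0" by simp
  qed auto
  finally show ?thesis using n2 by (simp add: add_ac n_def)
qed

lemma frob_add_pow:
  fixes \<iota> :: "'k::{finite,field} \<Rightarrow> 'l::field"
  assumes h: "rhom \<iota>"
  shows "(x + y) ^ (CARD('k) ^ w) = x ^ (CARD('k) ^ w) + (y::'l) ^ (CARD('k) ^ w)"
proof (induction w)
  case (Suc w)
  have e: "CARD('k) ^ Suc w = CARD('k) ^ w * CARD('k)" by (simp add: power_Suc2)
  have "(x + y) ^ (CARD('k) ^ Suc w) = ((x + y) ^ (CARD('k) ^ w)) ^ CARD('k)"
    by (simp only: e power_mult)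
  also have "\<dots> = (x ^ (CARD('k) ^ w)) ^ CARD('k) + (y ^ (CARD('k) ^ w)) ^ CARD('k)"
    by (simp add: Suc frob_add[OF h])
  finally show ?case by (simp only: e power_mult)
qed simp

lemma frob_sum_pow:
  fixes \<iota> :: "'k::{finite,field} \<Rightarrow> 'l::field"
  assumes h: "rhom \<iota>"
  shows "(sum f A) ^ (CARD('k) ^ w) = (\<Sum>i\<in>A. (f i :: 'l) ^ (CARD('k) ^ w))"
  by (induction A rule: infinite_finite_induct) (simp_all add: frob_add_pow[OF h])

lemma frob_poly:
  fixes \<iota> :: "'k::{finite,field} \<Rightarrow> 'l::field"
  assumes h: "rhom \<iota>"
  shows "poly (map_poly \<iota> a) x ^ (CARD('k) ^ w) = poly (map_poly \<iota> a) (x ^ (CARD('k) ^ w))"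
proof -
  have "poly (map_poly \<iota> a) x ^ (CARD('k) ^ w) =
     (\<Sum>i\<le>degree (map_poly \<iota> a). (coeff (map_poly \<iota> a) i * x ^ i) ^ (CARD('k) ^ w))"
    unfolding poly_altdef by (rule frob_sum_pow[OF h])
  also have "\<dots> = (\<Sum>i\<le>degree (map_poly \<iota> a). coeff (map_poly \<iota> a) i * (x ^ (CARD('k) ^ w)) ^ i)"
  proof (intro sum.cong refl)
    fix i
    have "\<iota> (coeff a i) ^ (CARD('k) ^ w) = \<iota> (coeff a i ^ (CARD('k) ^ w))" by (simp add: rhom_power[OF h])
    also have "\<dots> = \<iota> (coeff a i)" by (simp add: fin_field_pow_card_pow)
    finally show "(coeff (map_poly \<iota> a) i * x ^ i) ^ (CARD('k) ^ w) = coeff (map_poly \<iota> a) i * (x ^ (CARD('k) ^ w)) ^ i"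
      by (simp add: coeff_map_poly rhom_0[OF h] power_mult_distrib flip: power_mult) (simp add: mult.commute)
  qed
  also have "\<dots> = poly (map_poly \<iota> a) (x ^ (CARD('k) ^ w))"
    unfolding poly_altdef ..
  finally show ?thesis .
qed

lemma root_not_dvd:
  fixes \<iota> :: "'k::field \<Rightarrow> 'l::field"
  assumes h: "rhom \<iota>" and p: "irreducible p" and th: "poly (map_poly \<iota> p) \<theta> = 0"
    and nd: "\<not> p dvd c"
  shows "poly (map_poly \<iota> c) \<theta> \<noteq> 0"
proof
  assume c0: "poly (map_poly \<iota> c) \<theta> = 0"
  define S where "S = {c. poly (map_poly \<iota> c) \<theta> = 0}"
  have p0: "p \<noteq> 0" using p by auto
  have "\<exists>n. \<exists>g\<in>S. g \<noteq> 0 \<and> degree g = n" using th p0 by (auto simp: S_def)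
  then obtain n where "\<exists>g\<in>S. g \<noteq> 0 \<and> degree g = n"
     and min: "\<forall>m<n. \<not> (\<exists>g\<in>S. g \<noteq> 0 \<and> degree g = m)"
    by (subst (asm) exists_least_iff) blast
  then obtain g where gS: "g \<in> S" and g0: "g \<noteq> 0" and dg: "degree g = n" by blast
  have gdvd: "g dvd c'" if "c' \<in> S" for c'
  proof -
    have e: "poly (map_poly \<iota> c') \<theta> = poly (map_poly \<iota> (c' div g * g + c' mod g)) \<theta>" by simp
    have "poly (map_poly \<iota> c') \<theta> = poly (map_poly \<iota> (c' div g)) \<theta> * poly (map_poly \<iota> g) \<theta>
        + poly (map_poly \<iota> (c' mod g)) \<theta>"
      unfolding e by (simp only: rhom_map_poly_add[OF h] rhom_map_poly_mult[OF h] poly_add poly_mult)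
    hence "c' mod g \<in> S" using that gS by (simp add: S_def)
    moreover have "c' mod g \<noteq> 0 \<Longrightarrow> degree (c' mod g) < n"
      using degree_mod_less'[OF g0] dg by auto
    ultimately have "c' mod g = 0" using min by blast
    thus ?thesis by (rule mod_0_imp_dvd)
  qed
  have "g dvd p" using gdvd th by (simp add: S_def)
  then obtain k where pk: "p = g * k" by (auto elim: dvdE)
  from irreducibleD[OF p pk] show False
  proof
    assume "is_unit g"
    then obtain a where ga: "g = [:a:]" and a': "a dvd 1"
      using is_unit_poly_iff[of g] by blast
    have a: "a \<noteq> 0" using a' by auto
    have "\<iota> a * \<iota> (inverse a) = 1" using a by (simp flip: rhom_mult[OF h] add: rhom_1[OF h])
    hence "\<iota> a \<noteq> 0" by auto
    thus False using gS a by (simp add: S_def ga rhom_0[OF h] map_poly_pCons)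
  next
    assume "is_unit k"
    hence "p dvd g" using mult_unit_dvd_iff[of k g g] pk by simp
    moreover have "g dvd c" using gdvd c0 by (simp add: S_def)
    ultimately show False using nd by (meson dvd_trans)
  qed
qed

definition Bset :: "nat \<Rightarrow> 'a::zero poly set" where
  "Bset n = {a. \<forall>i\<ge>n. coeff a i = 0}"

lemma card_Bset: "card (Bset n :: 'a::{finite,zero} poly set) = CARD('a) ^ n"
proof (induction n)
  case 0
  have "Bset 0 = {0 :: 'a poly}" by (auto simp: Bset_def poly_eq_iff)
  thus ?case by simp
next
  case (Suc n)
  have eq: "Bset (Suc n) = (\<lambda>(c,a). pCons c a) ` (UNIV \<times> (Bset n :: 'a poly set))"
  proof (intro equalityI subsetI)
    fix x :: "'a poly" assume x: "x \<in> Bset (Suc n)"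
    obtain c a where xa: "x = pCons c a" by (cases x) auto
    have "a \<in> Bset n" unfolding Bset_def
    proof (intro CollectI allI impI)
      fix i assume "n \<le> i"
      hence "coeff x (Suc i) = 0" using x by (simp add: Bset_def)
      thus "coeff a i = 0" by (simp add: xa)
    qed
    thus "x \<in> (\<lambda>(c,a). pCons c a) ` (UNIV \<times> Bset n)" using xa by auto
  next
    fix x :: "'a poly" assume "x \<in> (\<lambda>(c,a). pCons c a) ` (UNIV \<times> Bset n)"
    then obtain c a where xa: "x = pCons c a" and a: "a \<in> Bset n" by auto
    show "x \<in> Bset (Suc n)" unfolding Bset_def xa
    proof (intro CollectI allI impI)
      fix i assume "Suc n \<le> i"
      then obtain j where "i = Suc j" "n \<le> j" by (cases i) auto
      thus "coeff (pCons c a) i = 0" using a by (simp add: Bset_def)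
    qed
  qed
  have inj: "inj_on (\<lambda>(c,a). pCons c a) (UNIV \<times> (Bset n :: 'a poly set))"
    by (auto simp: inj_on_def)
  have fin: "finite (Bset n :: 'a poly set)"
  proof (rule card_ge_0_finite)
    have "CARD('a) > 0" by simp
    thus "card (Bset n :: 'a poly set) > 0" using Suc by simp
  qed
  have "card (Bset (Suc n) :: 'a poly set) = card ((UNIV :: 'a set) \<times> (Bset n :: 'a poly set))"
    unfolding eq using inj by (intro card_image)
  also have "\<dots> = CARD('a) * card (Bset n :: 'a poly set)"
    by (rule card_cartesian_product)
  finally show ?case using Suc by simp
qed

lemma Bset_degree:
  assumes "a \<in> Bset n" "a \<noteq> 0" shows "degree a < n"
proof (rule ccontr)
  assume "\<not> degree a < n"
  hence "coeff a (degree a) = 0" using assms(1) by (simp add: Bset_def)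
  thus False using assms(2) by simp
qed

lemma degree_le_of_frob_fix:
  fixes \<iota> :: "'k::{finite,field} \<Rightarrow> 'l::field"
  assumes h: "rhom \<iota>" and p: "irreducible p" and th: "poly (map_poly \<iota> p) \<theta> = 0"
    and fx: "\<theta> ^ (CARD('k) ^ w) = \<theta>" and w: "w > 0"
  shows "degree p \<le> w"
proof -
  define n where "n = degree p"
  define q where "q = CARD('k)"
  have q2: "q \<ge> 2" unfolding q_def by (rule card_ge2)
  define F where "F a = poly (map_poly \<iota> a) \<theta>" for a
  have inj: "inj_on F (Bset n)"
  proof (rule inj_onI)
    fix a b assume a: "a \<in> Bset n" and b: "b \<in> Bset n" and e: "F a = F b"
    show "a = b"
    proof (rule ccontr)
      assume ne: "a \<noteq> b"
      have "a - b \<in> Bset n" using a b by (simp add: Bset_def)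
      hence dl: "degree (a - b) < n" using ne Bset_degree[of "a - b" n] by auto
      have "\<not> p dvd (a - b)"
      proof
        assume "p dvd a - b"
        hence "degree p \<le> degree (a - b)" using ne by (intro dvd_imp_degree_le) auto
        thus False using dl n_def by simp
      qed
      hence "poly (map_poly \<iota> (a - b)) \<theta> \<noteq> 0" by (rule root_not_dvd[OF h p th])
      thus False using e by (simp add: F_def rhom_map_poly_diff[OF h])
    qed
  qed
  define Zp :: "'l poly" where "Zp = monom 1 (q ^ w) - [:0,1:]"
  have qw: "q ^ w \<ge> 2"
  proof -
    have "q ^ 1 \<le> q ^ w" using q2 w by (intro power_increasing) auto
    thus ?thesis using q2 by simp
  qed
  have degZ: "degree Zp = q ^ w"
    unfolding Zp_def using qw q2
    by (simp only: diff_conv_add_uminus, subst degree_add_eq_left) (auto simp: degree_monom_eq)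
  hence Znz: "Zp \<noteq> 0" using qw q2 by (auto simp: Zp_def)
  have sub: "F ` Bset n \<subseteq> {x. poly Zp x = 0}"
  proof
    fix y assume "y \<in> F ` Bset n"
    then obtain a where y: "y = F a" by auto
    have "y ^ (q ^ w) = y" unfolding y F_def q_def by (simp add: frob_poly[OF h] fx)
    thus "y \<in> {x. poly Zp x = 0}" by (simp add: Zp_def poly_monom)
  qed
  have "q ^ n = card (F ` Bset n)" using card_image[OF inj] card_Bset[where 'a='k] by (simp add: q_def)
  also have "\<dots> \<le> card {x. poly Zp x = 0}"
    by (rule card_mono[OF poly_roots_finite[OF Znz] sub])
  also have "\<dots> \<le> q ^ w" using card_poly_roots_bound[OF Znz] degZ by simp
  finally have le: "q ^ n \<le> q ^ w" .
  have "n \<le> w" by (rule power_le_imp_le_exp[OF _ le]) (use q2 in auto)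
  thus ?thesis using n_def by simp
qed

definition ev0 :: "'k::comm_ring_1 poly poly \<Rightarrow> 'k poly" where
  "ev0 P = map_poly (\<lambda>c. coeff c 0) P"

lemma rhom_ev0: "rhom ev0"
  unfolding ev0_def[abs_def] by (intro rhom_map_poly rhom_coeff0)

lemma ev0_lift: "ev0 (map_poly (\<lambda>c. [:c:]) r) = r"
  unfolding ev0_def by (subst map_poly_map_poly) (auto simp: o_def)

lemma ev0_varX: "ev0 (varX :: 'k::comm_ring_1 poly poly) = 0"
  by (simp add: ev0_def varX_def map_poly_pCons)

lemma X_dvd_of_ev0:
  fixes D :: "'k::field poly poly"
  assumes "ev0 D = 0"
  shows "D = varX * map_poly (\<lambda>c. c div [:0,1:]) D"
proof (rule poly_eqI)
  fix i
  have c0: "poly (coeff D i) 0 = 0"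
    using arg_cong[OF assms, of "\<lambda>P. coeff P i"] by (simp add: ev0_def coeff_map_poly poly_0_coeff_0)
  hence dv: "[:0,1:] dvd coeff D i" using poly_eq_0_iff_dvd[of "coeff D i" 0] by simp
  have "varX * map_poly (\<lambda>c. c div [:0,1:]) D = smult [:0,1:] (map_poly (\<lambda>c. c div [:0,1:]) D)"
    by (simp add: varX_def)
  hence "coeff (varX * map_poly (\<lambda>c. c div [:0,1:]) D) i = [:0,1:] * (coeff D i div [:0,1:])"
    by (simp add: coeff_map_poly)
  also have "\<dots> = coeff D i" by (rule dvd_mult_div_cancel[OF dv])
  finally show "coeff D i = coeff (varX * map_poly (\<lambda>c. c div [:0,1:]) D) i" by simp
qed

lemma relX_iff:
  fixes \<xi> u v :: "'k::field poly poly"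
  shows "(\<exists>r s. u - v = r * \<xi> + s * varX) \<longleftrightarrow> ev0 \<xi> dvd ev0 u - ev0 v"
proof
  assume "\<exists>r s. u - v = r * \<xi> + s * varX"
  then obtain r s where e: "u - v = r * \<xi> + s * varX" by blast
  have "ev0 u - ev0 v = ev0 (u - v)" by (simp add: rhom_diff[OF rhom_ev0])
  also have "\<dots> = ev0 r * ev0 \<xi>"
    unfolding e by (simp add: rhom_add[OF rhom_ev0] rhom_mult[OF rhom_ev0] ev0_varX)
  finally show "ev0 \<xi> dvd ev0 u - ev0 v" by simp
next
  assume "ev0 \<xi> dvd ev0 u - ev0 v"
  then obtain r0 where r0: "ev0 u - ev0 v = ev0 \<xi> * r0" by (auto elim: dvdE)
  define R where "R = map_poly (\<lambda>c. [:c:]) r0"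
  define D where "D = (u - v) - R * \<xi>"
  have "ev0 D = 0"
    unfolding D_def using r0
    by (simp add: rhom_diff[OF rhom_ev0] rhom_mult[OF rhom_ev0] R_def ev0_lift mult.commute)
  hence "D = varX * map_poly (\<lambda>c. c div [:0,1:]) D" by (rule X_dvd_of_ev0)
  hence "u - v = R * \<xi> + map_poly (\<lambda>c. c div [:0,1:]) D * varX"
    unfolding D_def by (simp add: algebra_simps)
  thus "\<exists>r s. u - v = r * \<xi> + s * varX" by blast
qed

lemma card_quotient_fun:
  fixes F :: "'a \<Rightarrow> 'b"
  shows "card (UNIV // {(u, v). F u = F v}) = card (range F)"
proof -
  have "UNIV // {(u, v). F u = F v} = (\<lambda>x. F -` {F x}) ` UNIV"
    unfolding quotient_def by (auto simp: vimage_def eq_commute)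
  also have "\<dots> = (\<lambda>z. F -` {z}) ` range F" by (simp add: image_image)
  finally have "UNIV // {(u, v). F u = F v} = (\<lambda>z. F -` {z}) ` range F" .
  moreover have "inj_on (\<lambda>z. F -` {z}) (range F)"
  proof (rule inj_onI)
    fix z1 z2 assume "z1 \<in> range F" "z2 \<in> range F" and e: "F -` {z1} = F -` {z2}"
    then obtain x where "F x = z1" by auto
    hence "x \<in> F -` {z2}" using e by auto
    thus "z1 = z2" using \<open>F x = z1\<close> by auto
  qed
  ultimately show ?thesis by (simp add: card_image)
qed

lemma quot_card_X:
  fixes f h :: "'k::{finite,field} poly"
  shows "quot_card [:-f, h, 1:] varX = CARD('k) ^ 2"
proof -
  define \<xi> :: "'k poly poly" where "\<xi> = [:-f, h, 1:]"
  define \<xi>0 where "\<xi>0 = ev0 \<xi>"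
  have c2: "coeff \<xi>0 2 = 1" by (simp add: \<xi>0_def ev0_def \<xi>_def coeff_map_poly numeral_2_eq_2)
  have "degree \<xi>0 \<le> 2"
    unfolding \<xi>0_def ev0_def by (rule order.trans[OF map_poly_degree_leq]) (simp add: \<xi>_def)
  moreover have "2 \<le> degree \<xi>0" using c2 by (intro le_degree) simp
  ultimately have d2: "degree \<xi>0 = 2" by simp
  hence nz: "\<xi>0 \<noteq> 0" by auto
  define F where "F u = ev0 u mod \<xi>0" for u
  have rel: "{(u, v). \<exists>r s. u - v = r * \<xi> + s * varX} = {(u, v). F u = F v}"
    by (auto simp: relX_iff F_def \<xi>0_def mod_eq_dvd_iff)
  have rng: "range F = Bset 2"
  proof (intro equalityI subsetI)
    fix y assume "y \<in> range F"
    then obtain u where y: "y = F u" by auto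
    show "y \<in> Bset 2"
    proof (cases "y = 0")
      case True thus ?thesis by (simp add: Bset_def)
    next
      case False
      hence "degree y < 2" using degree_mod_less'[OF nz] d2 y F_def by metis
      thus ?thesis by (auto simp: Bset_def coeff_eq_0)
    qed
  next
    fix y :: "'k poly" assume y: "y \<in> Bset 2"
    have "degree y < 2" using Bset_degree[OF y] by (cases "y = 0") auto
    hence "F (map_poly (\<lambda>c. [:c:]) y) = y" by (simp add: F_def ev0_lift mod_poly_less d2)
    thus "y \<in> range F" by (metis rangeI)
  qed
  have "quot_card \<xi> varX = card (range F)"
    unfolding quot_card_def rel by (rule card_quotient_fun)
  also have "\<dots> = CARD('k) ^ 2" unfolding rng by (rule card_Bset)
  finally show ?thesis by (simp add: \<xi>_def)
qed

lemma varX_lift: "(varX :: 'k::comm_ring_1 poly poly) * [:a:] = [:pCons 0 a:]" by (simp add: varX_def)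
lemma lift_add_pCons0: "[:[:c:]:] + [:pCons 0 a:] = [:pCons (c::'k::comm_ring_1) a:]" by simp

locale drin =
  fixes \<iota> :: "'k::{finite,field} \<Rightarrow> 'l::{finite,field}"
    and q d m :: nat and p h f :: "'k poly" and \<alpha> :: 'k and \<xi> :: "'k poly poly"
    and \<theta> :: 'l and \<phi> :: "'k poly poly \<Rightarrow> 'l poly"
  assumes q: "q = CARD('k)"
    and d: "odd d" "d \<ge> 5" and m: "m > 0" "m dvd d"
    and p: "lead_coeff p = 1" "irreducible p" "degree p = d div m"
    and \<alpha>: "\<alpha> \<noteq> 0" and f: "f = smult \<alpha> (p ^ m)"
    and h: "degree h \<le> (d - 1) div 2" "\<not> p dvd h"
    and \<xi>: "\<xi> = [:- f, h, 1:]"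
    and \<iota>: "inj \<iota>" "rhom \<iota>"
    and L: "CARD('l) = q ^ d"
    and \<theta>: "poly (map_poly \<iota> p) \<theta> = 0"
    and \<phi>: "\<phi> \<in> Dr1 q \<iota> \<theta> \<xi>"
begin

lemma q0: "q > 0" using card_ge2[where 'a='k] q by simp
lemma q2: "q \<ge> 2" using card_ge2[where 'a='k] q by simp

lemma phi_add: "\<phi> (P + Q) = \<phi> P + \<phi> Q" using \<phi> unfolding Dr1_def mem_Collect_eq by blast
lemma phi_mult: "\<phi> (P * Q) = ore_mult q (\<phi> P) (\<phi> Q)" using \<phi> unfolding Dr1_def mem_Collect_eq by blast
lemma phi_const: "\<phi> [:[:c:]:] = [:\<iota> c:]" using \<phi> unfolding Dr1_def mem_Collect_eq by blast
lemma phi_xi: "\<phi> \<xi> = 0" using \<phi> unfolding Dr1_def mem_Collect_eq by blast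
lemma phi_coeff0: "coeff (\<phi> P) 0 = gam \<iota> \<theta> P" using \<phi> unfolding Dr1_def mem_Collect_eq by blast
lemma phi_rank: "\<not> \<xi> dvd P \<Longrightarrow> real (degree (\<phi> P)) = log (real q) (real (quot_card \<xi> P))"
  using \<phi> unfolding Dr1_def mem_Collect_eq by blast

lemma phi_0: "\<phi> 0 = 0"
proof -
  have e: "\<phi> 0 = \<phi> 0 + \<phi> 0" using phi_add[of 0 0] by (simp only: add_0)
  show ?thesis using add_cancel_right_right[of "\<phi> 0" "\<phi> 0"] e by blast
qed
lemma phi_uminus: "\<phi> (- P) = - \<phi> P"
  using phi_add[of P "-P"] phi_0 by (simp add: eq_neg_iff_add_eq_0 add.commute)
lemma phi_diff: "\<phi> (P - Q) = \<phi> P - \<phi> Q"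
  using phi_add[of P "-Q"] phi_uminus[of Q] by simp

lemma iota0: "\<iota> 0 = 0" by (rule rhom_0[OF \<iota>(2)])
lemma iota_nz: assumes "c \<noteq> 0" shows "\<iota> c \<noteq> 0"
proof
  assume "\<iota> c = 0"
  hence "\<iota> c = \<iota> 0" by (simp add: iota0)
  hence "c = 0" using injD[OF \<iota>(1)] by blast
  thus False using assms by simp
qed

lemma gam_lift: "gam \<iota> \<theta> [:a:] = poly (map_poly \<iota> a) \<theta>"
  by (simp add: gam_def)

lemma lift_pCons: "[:pCons c a:] = [:[:c:]:] + varX * [:a:]"
  by (simp only: varX_lift lift_add_pCons0)

lemma phi_lift_pCons: "\<phi> [:pCons c a:] = [:\<iota> c:] + ore_mult q (\<phi> varX) (\<phi> [:a:])"
  by (subst lift_pCons) (simp only: phi_add phi_mult phi_const)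

lemma xi_not_dvd_X: "\<not> \<xi> dvd varX"
proof
  assume "\<xi> dvd varX"
  then obtain r where r: "varX = \<xi> * r" by (auto elim: dvdE)
  have "varX \<noteq> (0 :: 'k poly poly)" by (simp add: varX_def)
  hence "r \<noteq> 0" using r by auto
  moreover have "degree \<xi> = 2" "\<xi> \<noteq> 0" using \<xi> by auto
  ultimately have "degree (\<xi> * r) = 2 + degree r" by (simp add: degree_mult_eq)
  moreover have "degree (varX :: 'k poly poly) = 0" by (simp add: varX_def)
  ultimately show False using r by simp
qed

lemma degX: "degree (\<phi> varX) = 2"
proof -
  have "real (degree (\<phi> varX)) = log (real q) (real (q ^ 2))"
    using phi_rank[OF xi_not_dvd_X] quot_card_X[of f h] \<xi> q by simp
  also have "\<dots> = 2" using q2 by (simp add: log_nat_power)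
  finally show ?thesis by simp
qed

definition \<Delta> where "\<Delta> = coeff (\<phi> varX) 2"

lemma Delta_nz: "\<Delta> \<noteq> 0"
proof -
  have "\<phi> varX \<noteq> 0" using degX by auto
  hence "lead_coeff (\<phi> varX) \<noteq> 0" by simp
  thus ?thesis using degX unfolding \<Delta>_def by simp
qed

lemma X0: "coeff (\<phi> varX) 0 = \<theta>"
  unfolding phi_coeff0 by (simp add: gam_def varX_def map_poly_pCons iota0 rhom_1[OF \<iota>(2)])

lemma phiX_form: "\<phi> varX = [:\<theta>, coeff (\<phi> varX) 1, \<Delta>:]"
proof (rule poly_eqI)
  fix n
  show "coeff (\<phi> varX) n = coeff [:\<theta>, coeff (\<phi> varX) 1, \<Delta>:] n"
  proof (cases n)
    case 0 thus ?thesis by (simp add: X0)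
  next
    case (Suc n')
    show ?thesis
    proof (cases n')
      case 0 thus ?thesis using Suc by simp
    next
      case (Suc n'')
      show ?thesis
      proof (cases n'')
        case 0 thus ?thesis using Suc \<open>n = Suc n'\<close> by (simp add: \<Delta>_def numeral_2_eq_2)
      next
        case (Suc k)
        hence "coeff (\<phi> varX) n = 0" using \<open>n = Suc n'\<close> \<open>n' = Suc n''\<close> degX by (intro coeff_eq_0) simp
        thus ?thesis using Suc \<open>n = Suc n'\<close> \<open>n' = Suc n''\<close> by simp
      qed
    qed
  qed
qed

lemma lcX: "lead_coeff (\<phi> varX) = \<Delta>" by (simp add: degX \<Delta>_def)

end

lemma xi_split: "[:- f, h, 1:] = (varY + [:h:]) * varY - [:f::'k::comm_ring_1 poly:]"
  by (simp add: varY_def)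

context drin begin

definition Ex :: "nat \<Rightarrow> nat" where "Ex n = (\<Sum>i<n. q ^ (2 * i))"

lemma Ex_Suc: "Ex (Suc n) = 1 + q ^ 2 * Ex n"
proof -
  have "(\<Sum>i<Suc n. q ^ (2 * i)) = q ^ (2 * 0) + (\<Sum>i<n. q ^ (2 * Suc i))"
    by (rule sum.lessThan_Suc_shift)
  also have "(\<Sum>i<n. q ^ (2 * Suc i)) = (\<Sum>i<n. q ^ 2 * q ^ (2 * i))"
    by (intro sum.cong refl) (simp add: power_add power2_eq_square flip: power_mult)
  also have "\<dots> = q ^ 2 * (\<Sum>i<n. q ^ (2 * i))" by (simp add: sum_distrib_left)
  finally show ?thesis by (simp add: Ex_def)
qed

lemma iota_frob: "\<iota> x ^ (q ^ k) = \<iota> x"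
proof -
  have "\<iota> x ^ (q ^ k) = \<iota> (x ^ (q ^ k))" by (simp add: rhom_power[OF \<iota>(2)])
  also have "x ^ (q ^ k) = x" unfolding q by (rule fin_field_pow_card_pow)
  finally show ?thesis .
qed

lemma phi_lift:
  assumes "a \<noteq> 0"
  shows "\<phi> [:a:] \<noteq> 0 \<and> degree (\<phi> [:a:]) = 2 * degree a \<and>
    lead_coeff (\<phi> [:a:]) = \<iota> (lead_coeff a) * \<Delta> ^ Ex (degree a)"
  using assms
proof (induction a rule: pCons_induct)
  case 0 thus ?case by simp
next
  case (pCons c a)
  show ?case
  proof (cases "a = 0")
    case True
    hence c: "c \<noteq> 0" using pCons.hyps by simp
    have "\<phi> [:pCons c a:] = [:\<iota> c:]" using True phi_const by simp
    thus ?thesis using True c iota_nz by (simp add: Ex_def)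
  next
    case False
    define A where "A = \<phi> [:a:]"
    have IH: "A \<noteq> 0" "degree A = 2 * degree a" "lead_coeff A = \<iota> (lead_coeff a) * \<Delta> ^ Ex (degree a)"
      using pCons.IH[OF False] unfolding A_def by blast+
    have X0: "\<phi> varX \<noteq> 0" using degX by auto
    have od: "degree (ore_mult q (\<phi> varX) A) = 2 + 2 * degree a"
      using ore_degree(1)[OF q0 X0 IH(1)] degX IH(2) by simp
    have ol: "lead_coeff (ore_mult q (\<phi> varX) A) = \<Delta> * lead_coeff A ^ (q ^ 2)"
      using ore_degree(2)[OF q0 X0 IH(1)] degX lcX by simp
    have e: "\<phi> [:pCons c a:] = [:\<iota> c:] + ore_mult q (\<phi> varX) A"
      unfolding A_def by (rule phi_lift_pCons)
    have dlt: "degree [:\<iota> c:] < degree (ore_mult q (\<phi> varX) A)" using od by simp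
    have deg: "degree (\<phi> [:pCons c a:]) = 2 * degree (pCons c a)"
      unfolding e degree_add_eq_right[OF dlt] od using False by simp
    have "lead_coeff (\<phi> [:pCons c a:]) = \<Delta> * lead_coeff A ^ (q ^ 2)"
      unfolding e lead_coeff_add_le[OF dlt] ol ..
    also have "\<dots> = \<Delta> * (\<iota> (lead_coeff a) ^ (q ^ 2) * (\<Delta> ^ Ex (degree a)) ^ (q ^ 2))"
      by (simp add: IH(3) power_mult_distrib)
    also have "\<dots> = \<iota> (lead_coeff a) * \<Delta> ^ (1 + q ^ 2 * Ex (degree a))"
    proof -
      have e1: "\<iota> (lead_coeff a) ^ (q ^ 2) = \<iota> (lead_coeff a)" by (rule iota_frob)
      have e2: "(\<Delta> ^ Ex (degree a)) ^ (q ^ 2) = \<Delta> ^ (q ^ 2 * Ex (degree a))"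
        by (simp only: power_mult[symmetric] mult.commute)
      show ?thesis unfolding e1 e2 power_add power_one_right by (simp only: mult_ac)
    qed
    also have "\<dots> = \<iota> (lead_coeff (pCons c a)) * \<Delta> ^ Ex (degree (pCons c a))"
      using False by (simp add: Ex_Suc)
    finally have lc: "lead_coeff (\<phi> [:pCons c a:]) = \<iota> (lead_coeff (pCons c a)) * \<Delta> ^ Ex (degree (pCons c a))" .
    have "\<phi> [:pCons c a:] \<noteq> 0"
    proof
      assume "\<phi> [:pCons c a:] = 0"
      hence "degree (\<phi> [:pCons c a:]) = 0" by simp
      thus False using deg False by simp
    qed
    thus ?thesis using deg lc by blast
  qed
qed

lemma comm_phi: "ore_mult q (\<phi> P) (\<phi> Q) = ore_mult q (\<phi> Q) (\<phi> P)"
proof -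
  have "ore_mult q (\<phi> P) (\<phi> Q) = \<phi> (P * Q)" by (rule phi_mult[symmetric])
  also have "\<dots> = \<phi> (Q * P)" by (simp only: mult.commute)
  also have "\<dots> = ore_mult q (\<phi> Q) (\<phi> P)" by (rule phi_mult)
  finally show ?thesis .
qed

lemma relY: "ore_mult q (\<phi> varY + \<phi> [:h:]) (\<phi> varY) = \<phi> [:f:]"
proof -
  have e: "\<xi> = (varY + [:h:]) * varY - [:f:]" unfolding \<xi> by (rule xi_split)
  have "0 = \<phi> ((varY + [:h:]) * varY - [:f:])" using phi_xi[unfolded e] by simp
  also have "\<dots> = ore_mult q (\<phi> varY + \<phi> [:h:]) (\<phi> varY) - \<phi> [:f:]"
    by (simp only: phi_diff phi_mult phi_add)
  finally show ?thesis by simp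
qed

lemma p0: "p \<noteq> 0" using p(2) by auto
lemma degf: "degree f = d"
  using f \<alpha> p0 p(3) m by (simp add: degree_power_eq)
lemma lcf: "lead_coeff f = \<alpha>"
  using f p(1) by (simp add: lead_coeff_power)
lemma f0: "f \<noteq> 0" using f \<alpha> p0 by simp
lemma h0: "h \<noteq> 0" using h(2) by auto

lemma F_props: "\<phi> [:f:] \<noteq> 0" "degree (\<phi> [:f:]) = 2 * d"
  "lead_coeff (\<phi> [:f:]) = \<iota> \<alpha> * \<Delta> ^ Ex d"
  using phi_lift[OF f0] degf lcf by auto

lemma H_deg: "degree (\<phi> [:h:]) \<le> d - 1"
proof -
  have "degree (\<phi> [:h:]) = 2 * degree h" using phi_lift[OF h0] by simp
  also have "\<dots> \<le> 2 * ((d - 1) div 2)" using h(1) by simp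
  also have "\<dots> \<le> d - 1" by simp
  finally show ?thesis .
qed

lemma degY: "degree (\<phi> varY) = d"
proof -
  let ?Y = "\<phi> varY" and ?H = "\<phi> [:h:]"
  have Y0: "?Y \<noteq> 0"
  proof
    assume "?Y = 0"
    hence "\<phi> [:f:] = 0" using relY[symmetric] ore_0_right[OF q0] by simp
    thus False using F_props(1) by simp
  qed
  have YH0: "?Y + ?H \<noteq> 0"
  proof
    assume "?Y + ?H = 0"
    hence "\<phi> [:f:] = 0" using relY[symmetric] ore_0_left by simp
    thus False using F_props(1) by simp
  qed
  have sum: "degree (?Y + ?H) + degree ?Y = 2 * d"
    using ore_degree(1)[OF q0 YH0 Y0] relY F_props(2) by simp
  show ?thesis
  proof (cases "degree ?H < degree ?Y")
    case True
    hence "degree (?Y + ?H) = degree ?Y" by (rule degree_add_eq_left)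
    thus ?thesis using sum by simp
  next
    case False
    hence "degree (?Y + ?H) \<le> degree ?H" by (simp add: degree_add_le)
    hence "degree (?Y + ?H) + degree ?Y \<le> 2 * (d - 1)" using False H_deg by simp
    thus ?thesis using sum d by simp
  qed
qed

end

lemma inj_2mod: assumes "odd (d::nat)" shows "inj_on (\<lambda>i. 2*i mod d) {..<d}"
proof (rule inj_onI)
  fix i j assume i: "i \<in> {..<d}" and j: "j \<in> {..<d}" and e: "2*i mod d = 2*j mod d"
  have "int d dvd int (2*i) - int (2*j)" using e by (metis mod_eq_dvd_iff of_nat_mod)
  hence "int d dvd 2 * (int i - int j)" by simp
  moreover have "coprime (int d) 2" using assms by simp
  ultimately have dv: "int d dvd (int i - int j)" by (metis coprime_dvd_mult_right_iff mult.commute)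
  show "i = j"
  proof (rule ccontr)
    assume "i \<noteq> j"
    hence "int i - int j \<noteq> 0" by simp
    hence "\<bar>int d\<bar> \<le> \<bar>int i - int j\<bar>" using dv by (rule dvd_imp_le_int)
    thus False using i j by auto
  qed
qed

context drin begin

lemma Y0: "coeff (\<phi> varY) 0 = 0"
  unfolding phi_coeff0 by (simp add: gam_def varY_def iota0)

lemma H0: "coeff (\<phi> [:h:]) 0 \<noteq> 0"
  unfolding phi_coeff0 gam_lift by (rule root_not_dvd[OF \<iota>(2) p(2) \<theta> h(2)])

lemma lift_mult: "[:a * b:] = [:a:] * [:b:]" by (simp add: mult.commute)

lemma phi_one: "\<phi> 1 = 1"
proof -
  have a: "(1::'k poly poly) = [:[:1:]:]" by (simp add: one_pCons[symmetric])
  have b: "(1::'l poly) = [:\<iota> 1:]" using rhom_1[OF \<iota>(2)] by (simp add: one_pCons[symmetric])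
  show ?thesis by (subst a, subst b, rule phi_const)
qed

lemma pow_low:
  assumes w: "\<forall>j<w. coeff (\<phi> [:p:]) j = 0" "coeff (\<phi> [:p:]) w \<noteq> 0"
  shows "(\<forall>j<k*w. coeff (\<phi> [:p^k:]) j = 0) \<and> coeff (\<phi> [:p^k:]) (k*w) \<noteq> 0"
proof (induction k)
  case 0
  have "\<phi> [:p^0:] = 1" using phi_one by (simp add: one_pCons[symmetric])
  thus ?case by simp
next
  case (Suc k)
  have e: "\<phi> [:p^Suc k:] = ore_mult q (\<phi> [:p:]) (\<phi> [:p^k:])"
    by (simp only: power_Suc lift_mult phi_mult)
  have c: "coeff (\<phi> [:p^Suc k:]) n = (if n = w + k*w then coeff (\<phi> [:p:]) w * coeff (\<phi> [:p^k:]) (k*w) ^ (q ^ w) else 0)"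
    if "n \<le> w + k*w" for n
    unfolding e using coeff_ore_low[OF q0 w(1), of "k*w" "\<phi> [:p^k:]" n] Suc that by blast
  have "coeff (\<phi> [:p:]) w * coeff (\<phi> [:p^k:]) (k*w) ^ (q ^ w) \<noteq> 0"
    using w(2) Suc by simp
  thus ?case using c by (auto simp: add.commute)
qed

lemma Y_monom: "\<phi> varY = monom (coeff (\<phi> varY) d) d"
proof -
  let ?Y = "\<phi> varY" and ?H = "\<phi> [:h:]" and ?F = "\<phi> [:f:]" and ?P = "\<phi> [:p:]"
  have Ynz: "?Y \<noteq> 0" using degY d by auto
  hence "lead_coeff ?Y \<noteq> 0" by simp
  hence Yd: "coeff ?Y d \<noteq> 0" using degY by simp
  hence "\<exists>j. coeff ?Y j \<noteq> 0" by blast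
  define u where "u = (LEAST j. coeff ?Y j \<noteq> 0)"
  have Yu: "coeff ?Y u \<noteq> 0" unfolding u_def using \<open>\<exists>j. coeff ?Y j \<noteq> 0\<close> by (rule LeastI_ex)
  have Ylow: "\<forall>j<u. coeff ?Y j = 0" unfolding u_def using not_less_Least by blast
  have ud: "u \<le> d" unfolding u_def using Yd by (rule Least_le)
  have YH0: "coeff (?Y + ?H) 0 \<noteq> 0" using Y0 H0 by simp
  have Fc: "coeff ?F n = (if n = u then coeff (?Y + ?H) 0 * coeff ?Y u else 0)" if "n \<le> u" for n
    using coeff_ore_low[OF q0, of 0 "?Y + ?H" u ?Y n] Ylow that relY by simp
  have Pnz: "?P \<noteq> 0" using phi_lift[OF p0] by simp
  hence "lead_coeff ?P \<noteq> 0" by simp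
  hence "\<exists>j. coeff ?P j \<noteq> 0" by blast
  define w where "w = (LEAST j. coeff ?P j \<noteq> 0)"
  have Pw: "coeff ?P w \<noteq> 0" unfolding w_def using \<open>\<exists>j. coeff ?P j \<noteq> 0\<close> by (rule LeastI_ex)
  have Plow: "\<forall>j<w. coeff ?P j = 0" unfolding w_def using not_less_Least by blast
  have P0: "coeff ?P 0 = 0" unfolding phi_coeff0 gam_lift by (rule \<theta>)
  have w0: "w > 0" using Pw P0 by (cases w) auto
  have fl: "[:f:] = [:[:\<alpha>:]:] * [:p ^ m:]" using f by simp
  have Fe: "?F = smult (\<iota> \<alpha>) (\<phi> [:p ^ m:])"
    unfolding fl phi_mult phi_const ore_const_left[OF q0] ..
  have PM: "(\<forall>j<m*w. coeff (\<phi> [:p^m:]) j = 0) \<and> coeff (\<phi> [:p^m:]) (m*w) \<noteq> 0"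
    by (rule pow_low[OF Plow Pw])
  have ia: "\<iota> \<alpha> \<noteq> 0" by (rule iota_nz[OF \<alpha>])
  have umw: "u = m * w"
  proof (rule ccontr)
    assume "u \<noteq> m * w"
    hence "u < m * w \<or> m * w < u" by auto
    thus False
    proof
      assume "u < m * w"
      hence "coeff ?F u = 0" using PM Fe by simp
      thus False using Fc[of u] YH0 Yu by simp
    next
      assume "m * w < u"
      hence "coeff ?F (m*w) = 0" using Fc[of "m*w"] by simp
      thus False using PM Fe ia by simp
    qed
  qed
  have "coeff (\<phi> varX) 0 ^ (q ^ w) = coeff (\<phi> varX) 0"
    by (rule comm_low[OF q0 comm_phi Plow Pw])
  hence "\<theta> ^ (CARD('k) ^ w) = \<theta>" using X0 q by simp
  hence "degree p \<le> w" by (rule degree_le_of_frob_fix[OF \<iota>(2) p(2) \<theta> _ w0])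
  hence "d div m \<le> w" using p(3) by simp
  hence "m * (d div m) \<le> m * w" by simp
  hence "d \<le> u" using umw m by simp
  hence ud': "u = d" using ud by simp
  show ?thesis
  proof (rule poly_eqI)
    fix n
    show "coeff ?Y n = coeff (monom (coeff ?Y d) d) n"
    proof (cases "n < d")
      case True thus ?thesis using Ylow ud' by (simp add: coeff_monom)
    next
      case False
      show ?thesis
      proof (cases "n = d")
        case True thus ?thesis by simp
      next
        case F2: False
        hence "n > d" using False by simp
        thus ?thesis using degY by (simp add: coeff_eq_0 coeff_monom)
      qed
    qed
  qed
qed

definition cY where "cY = coeff (\<phi> varY) d"

lemma cY_nz: "cY \<noteq> 0"
proof -
  have "\<phi> varY \<noteq> 0" using degY d by auto
  hence "lead_coeff (\<phi> varY) \<noteq> 0" by simp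
  thus ?thesis using degY by (simp add: cY_def)
qed

lemma L_frob: "x ^ (q ^ d) = (x :: 'l)"
  using fin_field_pow_card[of x] L by simp

lemma frob_mod: "x ^ (q ^ n) = (x :: 'l) ^ (q ^ (n mod d))"
proof -
  have "q ^ n = q ^ (n mod d + d * (n div d))" by (simp only: mod_mult_div_eq)
  also have "\<dots> = q ^ (n mod d) * (q ^ d) ^ (n div d)" by (simp only: power_add power_mult)
  finally have "x ^ (q ^ n) = (x ^ (q ^ (n mod d))) ^ ((q ^ d) ^ (n div d))"
    by (simp only: power_mult)
  also have "\<dots> = x ^ (q ^ (n mod d))"
    using fin_field_pow_card_pow[of "x ^ (q ^ (n mod d))" "n div d"] L by simp
  finally show ?thesis .
qed

lemma cY_frob: "cY ^ q = cY"
proof -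
  have comm: "ore_mult q (\<phi> varY) (\<phi> varX) = ore_mult q (\<phi> varX) (\<phi> varY)" by (rule comm_phi)
  have Ynz: "\<phi> varY \<noteq> 0" using degY d by auto
  have Xnz: "\<phi> varX \<noteq> 0" using degX by auto
  have "lead_coeff (\<phi> varX) * lead_coeff (\<phi> varY) ^ (q ^ degree (\<phi> varX)) =
        lead_coeff (\<phi> varY) * lead_coeff (\<phi> varX) ^ (q ^ degree (\<phi> varY))"
    by (rule comm_top[OF q0 comm Ynz Xnz])
  hence "\<Delta> * cY ^ (q ^ 2) = cY * \<Delta>"
    using degX degY lcX L_frob[of \<Delta>] by (simp add: cY_def)
  hence c2: "cY ^ (q ^ 2) = cY" using Delta_nz by (simp add: mult.commute)
  have ck: "cY ^ (q ^ (2 * k)) = cY" for k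
  proof (induction k)
    case 0 show ?case by simp
  next
    case (Suc k)
    have "cY ^ (q ^ (2 * Suc k)) = (cY ^ (q ^ 2)) ^ (q ^ (2 * k))"
      by (simp only: mult_Suc_right power_add power_mult)
    also have "\<dots> = cY ^ (q ^ (2 * k))" by (simp only: c2)
    also have "\<dots> = cY" by (rule Suc.IH)
    finally show ?case .
  qed
  from d(1) obtain k where "d = 2 * k + 1" by (rule oddE)
  hence dk: "d = Suc (2 * k)" by simp
  have "cY = cY ^ (q ^ d)" by (rule L_frob[symmetric])
  also have "\<dots> = cY ^ (q ^ (2 * k) * q)" unfolding dk by (simp only: power_Suc2)
  also have "\<dots> = (cY ^ (q ^ (2 * k))) ^ q" by (rule power_mult)
  also have "\<dots> = cY ^ q" by (simp only: ck)
  finally show ?thesis by (rule sym)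
qed

lemma fixed_in_range:
  assumes "x ^ q = (x :: 'l)"
  shows "x \<in> range \<iota>"
proof -
  define T where "T = {y :: 'l. y ^ q = y}"
  have sub: "range \<iota> \<subseteq> T" unfolding T_def using iota_frob[of _ 1] by auto
  define Zq :: "'l poly" where "Zq = monom 1 q - [:0,1:]"
  have degZ: "degree Zq = q"
    unfolding Zq_def using q2
    by (simp only: diff_conv_add_uminus, subst degree_add_eq_left) (auto simp: degree_monom_eq)
  hence Znz: "Zq \<noteq> 0" using q2 by auto
  have "T \<subseteq> {x. poly Zq x = 0}" unfolding T_def Zq_def by (auto simp: poly_monom)
  hence "card T \<le> card {x. poly Zq x = 0}" by (intro card_mono poly_roots_finite[OF Znz])
  also have "\<dots> \<le> q" using card_poly_roots_bound[OF Znz] degZ by simp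
  also have "q = card (range \<iota>)" using card_image[OF inj_on_subset[OF \<iota>(1)], of UNIV] q by simp
  finally have "card T \<le> card (range \<iota>)" .
  hence "range \<iota> = T" by (intro card_seteq[OF _ sub]) auto
  thus ?thesis using assms T_def by auto
qed

lemma Ex_fnorm: "\<Delta> ^ Ex d = fnorm q d \<Delta>"
proof -
  have "\<Delta> ^ Ex d = (\<Prod>i<d. \<Delta> ^ (q ^ (2 * i)))" unfolding Ex_def by (rule power_sum)
  also have "\<dots> = (\<Prod>i<d. \<Delta> ^ (q ^ (2 * i mod d)))" by (intro prod.cong refl frob_mod)
  also have "\<dots> = (\<Prod>j\<in>(\<lambda>i. 2 * i mod d) ` {..<d}. \<Delta> ^ (q ^ j))"
    by (rule prod.reindex[OF inj_2mod[OF d(1)], symmetric, unfolded o_def])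
  also have "(\<lambda>i. 2 * i mod d) ` {..<d} = {..<d}"
    using d by (intro endo_inj_surj inj_2mod) auto
  finally show ?thesis by (simp add: fnorm_def)
qed

lemma norm_eq: "cY ^ 2 = \<iota> \<alpha> * fnorm q d \<Delta>"
proof -
  let ?Y = "\<phi> varY" and ?H = "\<phi> [:h:]"
  have Ynz: "?Y \<noteq> 0" using degY d by auto
  have dlt: "degree ?H < degree ?Y" using H_deg degY d by simp
  have dYH: "degree (?Y + ?H) = d" using degree_add_eq_left[OF dlt] degY by simp
  have lYH: "lead_coeff (?Y + ?H) = cY"
    using lead_coeff_add_le[OF dlt] degY by (simp add: add.commute cY_def)
  have YH0: "?Y + ?H \<noteq> 0"
  proof
    assume "?Y + ?H = 0"
    hence "lead_coeff (?Y + ?H) = 0" by simp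
    thus False using lYH cY_nz by simp
  qed
  have "lead_coeff (\<phi> [:f:]) = lead_coeff (ore_mult q (?Y + ?H) ?Y)" using relY by simp
  also have "\<dots> = cY * cY ^ (q ^ d)"
    using ore_degree(2)[OF q0 YH0 Ynz] lYH dYH degY by (simp add: cY_def)
  also have "\<dots> = cY ^ 2" using L_frob by (simp add: power2_eq_square)
  finally show ?thesis using F_props(3) Ex_fnorm by simp
qed

end

lemma pCons_Y: "pCons a P = [:a:] + varY * (P :: 'k::comm_ring_1 poly poly)" by (simp add: varY_def)

context drin begin

lemma Fd: "coeff (\<phi> [:f:]) d = coeff (\<phi> [:h:]) 0 * cY"
proof -
  have low: "\<forall>j<d. coeff (\<phi> varY) j = 0"
    using Y_monom by (metis coeff_monom less_not_refl)
  have "coeff (\<phi> [:f:]) d = coeff (ore_mult q (\<phi> varY + \<phi> [:h:]) (\<phi> varY)) d"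
    using relY by simp
  also have "\<dots> = coeff (\<phi> varY + \<phi> [:h:]) 0 * coeff (\<phi> varY) d ^ (q ^ 0)"
    using coeff_ore_low[OF q0, of 0 "\<phi> varY + \<phi> [:h:]" d "\<phi> varY" d] low by simp
  also have "\<dots> = coeff (\<phi> [:h:]) 0 * cY" using Y0 by (simp add: cY_def)
  finally show ?thesis .
qed

lemma unique:
  assumes psi: "\<psi> \<in> Dr1 q \<iota> \<theta> \<xi>" and eqX: "\<psi> varX = \<phi> varX"
  shows "\<psi> = \<phi>"
proof -
  interpret P2: drin \<iota> q d m p h f \<alpha> \<xi> \<theta> \<psi>
    using drin_axioms psi unfolding drin_def by blast
  have lifts: "\<psi> [:a:] = \<phi> [:a:]" for a
  proof (induction a rule: pCons_induct)
    case 0 show ?case using P2.phi_0 phi_0 by simp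
  next
    case (pCons c a)
    show ?case unfolding P2.phi_lift_pCons phi_lift_pCons eqX pCons.IH ..
  qed
  have "coeff (\<phi> [:h:]) 0 * P2.cY = coeff (\<phi> [:h:]) 0 * cY"
    using P2.Fd Fd lifts by auto
  hence cc: "P2.cY = cY" using H0 by simp
  have eqY: "\<psi> varY = \<phi> varY"
    using P2.Y_monom Y_monom cc unfolding P2.cY_def cY_def by metis
  have "\<psi> P = \<phi> P" for P
  proof (induction P rule: pCons_induct)
    case 0 show ?case using P2.phi_0 phi_0 by simp
  next
    case (pCons a P)
    show ?case
      by (subst (1 2) pCons_Y) (simp only: P2.phi_add phi_add P2.phi_mult phi_mult lifts eqY pCons.IH)
  qed
  thus ?thesis by blast
qed

end

theorem lemma5:
  fixes \<iota> :: "'k::{finite,field} \<Rightarrow> 'l::{finite,field}"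
    and q d m :: nat and p h f :: "'k poly" and \<alpha> :: 'k and \<xi> :: "'k poly poly"
    and \<theta> :: 'l and \<phi> :: "'k poly poly \<Rightarrow> 'l poly"
  assumes q: "q = CARD('k)"
    and d: "odd d" "d \<ge> 5" and m: "m > 0" "m dvd d"
    and p: "lead_coeff p = 1" "irreducible p" "Polynomial.degree p = d div m"
    and \<alpha>: "\<alpha> \<noteq> 0" and f: "f = Polynomial.smult \<alpha> (p ^ m)"
    and h: "h \<noteq> 0" "Polynomial.degree h \<le> (d - 1) div 2" "\<not> p dvd h"
    and \<xi>: "\<xi> = [:- f, h, 1:]"
    and nonsing: "\<forall>x y :: 'k alg_closure.
        \<not> (poly (poly (map_poly (map_poly to_ac) \<xi>) [:y:]) x = 0 \<and>
           poly (poly (map_poly (map_poly to_ac) (map_poly pderiv \<xi>)) [:y:]) x = 0 \<and>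
           poly (poly (map_poly (map_poly to_ac) (pderiv \<xi>)) [:y:]) x = 0)"
    and \<iota>: "inj \<iota>" "\<iota> 1 = 1" "\<forall>a b. \<iota> (a + b) = \<iota> a + \<iota> b" "\<forall>a b. \<iota> (a * b) = \<iota> a * \<iota> b"
    and L: "CARD('l) = q ^ d"
    and \<theta>: "poly (map_poly \<iota> p) \<theta> = 0"
    and \<phi>: "\<phi> \<in> Dr1 q \<iota> \<theta> \<xi>"
  shows "\<exists>\<Delta> g \<beta>. \<Delta> \<noteq> 0 \<and> \<beta> \<noteq> 0 \<and>
           \<phi> varX = [:gam \<iota> \<theta> varX, g, \<Delta>:] \<and>
           \<phi> varY = Polynomial.monom (\<iota> \<beta>) d \<and>
           \<iota> (\<beta> ^ 2) = \<iota> \<alpha> * fnorm q d \<Delta> \<and>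
           (\<forall>\<psi> \<in> Dr1 q \<iota> \<theta> \<xi>. \<psi> varX = \<phi> varX \<longrightarrow> \<psi> = \<phi>)"
proof -
  have rh: "rhom \<iota>" using \<iota> by (simp add: rhom_def)
  interpret D: drin \<iota> q d m p h f \<alpha> \<xi> \<theta> \<phi>
    by (rule drin.intro) (use q d m p \<alpha> f h \<xi> \<iota>(1) rh L \<theta> \<phi> in auto)
  obtain \<beta> where \<beta>: "D.cY = \<iota> \<beta>" using D.fixed_in_range[OF D.cY_frob] by auto
  have \<beta>0: "\<beta> \<noteq> 0" using D.cY_nz \<beta> D.iota0 by auto
  have g: "gam \<iota> \<theta> varX = \<theta>" using D.X0 D.phi_coeff0 by simp
  show ?thesis
  proof (intro exI conjI)
    show "D.\<Delta> \<noteq> 0" by (rule D.Delta_nz)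
    show "\<beta> \<noteq> 0" by (rule \<beta>0)
    show "\<phi> varX = [:gam \<iota> \<theta> varX, coeff (\<phi> varX) 1, D.\<Delta>:]" unfolding g by (rule D.phiX_form)
    show "\<phi> varY = monom (\<iota> \<beta>) d" using D.Y_monom \<beta> unfolding D.cY_def by simp
    show "\<iota> (\<beta> ^ 2) = \<iota> \<alpha> * fnorm q d D.\<Delta>"
      using D.norm_eq \<beta> rhom_power[OF rh, of \<beta> 2] by simp
    show "\<forall>\<psi>\<in>Dr1 q \<iota> \<theta> \<xi>. \<psi> varX = \<phi> varX \<longrightarrow> \<psi> = \<phi>"
      using D.unique by blast
  qed
qed

end
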